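(* Absorption fails on the strict face of the cube: (i) applicative order $SSS$ absorbs none of $ISI$, call-by-value $ISS$, head applicative order $SSI$, i.e. $SSS\circ st\neq SSS$ for each $st\in\{ISI,ISS,SSI\}$ (witness $(\lambda x.y)(\lambda k.k\,\Omega)$); (ii) $ISS\circ ISI\neq ISS$ (witness $(\lambda x.y)(x\,\Omega)$); (iii) $SSI\circ ISI\neq SSI$ (witness $(\lambda x.y)(\lambda x.\Omega)$). Here $\Omega=(\lambda x.xx)(\lambda x.xx)$.
   Context: Terms: $\Lambda ::= x\mid\lambda x.\Lambda\mid\Lambda\Lambda$; $[N/x]B$ is capture-avoiding substitution. An evaluator is a partial function $\Lambda\rightharpoonup\Lambda$ defined by inference rules, undefined (divergent) where no finite derivation exists; $\mathrm{id}$ is the identity; composition is undefined where the inner evaluator is. Eval-apply template: given evaluators $la,op_1,ar_1,op_2,ar_2$ (possibly $ea$ itself), $ea$ is defined by (var) $ea(x)=x$; (abs) $ea(\lambda x.B)=\lambda x.B'$ if $la(B)=B'$; (con) $ea(MN)=B'$ if $op_1(M)=\lambda x.B$, $ar_1(N)=N'$, $ea([N'/x]B)=B'$; (neu) $ea(MN)=M''N'$ if $op_1(M)=M'$, $M'$ not an abstraction, $op_2(M')=M''$, $ar_2(N)=N'$. Uniform evaluator $XYZ\in\{I,S\}^3$: $op_1=ea$, $op_2=\mathrm{id}$, and $la$, $ar_1$, $ar_2$ equal to $ea$ itself when the corresponding letter $X$, $Y$, $Z$ is $S$ and to $\mathrm{id}$ when it is $I$. A strategy $st_2$ absorbs $st_1$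 iff $st_2\circ st_1=st_2$. *)

theory Defs
  imports Main
begin

datatype dB = Var nat | Lam dB | App dB dB

primrec lift :: "dB \<Rightarrow> nat \<Rightarrow> dB" where
  "lift (Var i) k = (if i < k then Var i else Var (Suc i))"
| "lift (Lam s) k = Lam (lift s (Suc k))"
| "lift (App s t) k = App (lift s k) (lift t k)"

text \<open>subst t s k: substitute s for index k in t (capture-avoiding by construction).
  For an abstraction Lam B, the beta-substitution [N/x]B is subst B N 0.\<close>
primrec subst :: "dB \<Rightarrow> dB \<Rightarrow> nat \<Rightarrow> dB" where
  "subst (Var i) s k = (if k < i then Var (i - 1) else if i = k then s else Var i)"
| "subst (Lam t) s k = Lam (subst t (lift s 0) (Suc k))"
| "subst (App t u) s k = App (subst t s k) (subst u s k)"

fun is_abs :: "dB \<Rightarrow> bool" where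
  "is_abs (Lam _) = True"
| "is_abs _ = False"

datatype ltr = I | S

text \<open>Big-step relation of the uniform evaluator XYZ: op1 = ea, op2 = id,
  la = ea if X = S else id, ar1 = ea if Y = S else id, ar2 = ea if Z = S else id.\<close>
inductive ev :: "ltr \<Rightarrow> ltr \<Rightarrow> ltr \<Rightarrow> dB \<Rightarrow> dB \<Rightarrow> bool" for X Y Z where
  var: "ev X Y Z (Var n) (Var n)"
| absI: "X = I \<Longrightarrow> ev X Y Z (Lam B) (Lam B)"
| absS: "X = S \<Longrightarrow> ev X Y Z B B' \<Longrightarrow> ev X Y Z (Lam B) (Lam B')"
| conI: "Y = I \<Longrightarrow> ev X Y Z M (Lam B) \<Longrightarrow> ev X Y Z (subst B N 0) B'
          \<Longrightarrow> ev X Y Z (App M N) B'"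
| conS: "Y = S \<Longrightarrow> ev X Y Z M (Lam B) \<Longrightarrow> ev X Y Z N N' \<Longrightarrow> ev X Y Z (subst B N' 0) B'
          \<Longrightarrow> ev X Y Z (App M N) B'"
| neuI: "Z = I \<Longrightarrow> ev X Y Z M M' \<Longrightarrow> \<not> is_abs M' \<Longrightarrow> ev X Y Z (App M N) (App M' N)"
| neuS: "Z = S \<Longrightarrow> ev X Y Z M M' \<Longrightarrow> \<not> is_abs M' \<Longrightarrow> ev X Y Z N N'
          \<Longrightarrow> ev X Y Z (App M N) (App M' N')"

definition eval :: "ltr \<Rightarrow> ltr \<Rightarrow> ltr \<Rightarrow> dB \<Rightarrow> dB option" where
  "eval X Y Z t = (if \<exists>u. ev X Y Z t u then Some (THE u. ev X Y Z t u) else None)"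

definition omega :: dB where
  "omega = App (Lam (App (Var 0) (Var 0))) (Lam (App (Var 0) (Var 0)))"

text \<open>Free variables: y is de Bruijn index 0, x is de Bruijn index 1 (at top level).
  Hence \<lambda>x.y is Lam (Var 1).\<close>
definition const_y :: dB where "const_y = Lam (Var 1)"

definition w1 :: dB where   \<comment> \<open>(\<lambda>x.y)(\<lambda>k. k \<Omega>)\<close>
  "w1 = App const_y (Lam (App (Var 0) omega))"
definition w2 :: dB where   \<comment> \<open>(\<lambda>x.y)(x \<Omega>) with x free\<close>
  "w2 = App const_y (App (Var 1) omega)"
definition w3 :: dB where   \<comment> \<open>(\<lambda>x.y)(\<lambda>x.\<Omega>)\<close>
  "w3 = App const_y (Lam omega)"

end

theory Submission
  imports Defs
begin

inductive_cases var_E: "ev X Y Z (Var n) u"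
inductive_cases lam_E[consumes 1, case_names aI aS]: "ev X Y Z (Lam B) u"
inductive_cases app_E[consumes 1, case_names cI cS nI nS]: "ev X Y Z (App M N) u"

lemma ev_det: "ev X Y Z t u \<Longrightarrow> ev X Y Z t u' \<Longrightarrow> u = u'"
proof (induction arbitrary: u' rule: ev.induct)
  case (var n) from var.prems show ?case by (cases rule: var_E) auto
next
  case (absI B) from absI.prems show ?case by (cases rule: lam_E) (auto simp: absI.hyps)
next
  case (absS B B') from absS.prems show ?case by (cases rule: lam_E) (auto simp: absS.hyps absS.IH)
next
  case (conI M B N B')
  note IH = conI.IH and hyps = conI.hyps
  from conI.prems show ?case
  proof (cases rule: app_E)
    case (cI B2)
    have "ev X Y Z M (Lam B2)" "ev X Y Z (subst B2 N 0) u'" using cI hyps(1) by simp_all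
    then show ?thesis using IH by (metis dB.inject(2))
  next
    case (cS B2 N2) then show ?thesis using hyps(1) by simp
  next
    case (nI M2)
    have "ev X Y Z M M2" using nI by simp
    then show ?thesis using IH(1) nI by (metis is_abs.simps(1))
  next
    case (nS M2 N2)
    have "ev X Y Z M M2" using nS by simp
    then show ?thesis using IH(1) nS by (metis is_abs.simps(1))
  qed
next
  case (conS M B N N' B')
  note IH = conS.IH and hyps = conS.hyps
  from conS.prems show ?case
  proof (cases rule: app_E)
    case (cI B2) then show ?thesis using hyps(1) by simp
  next
    case (cS B2 N2)
    have "ev X Y Z M (Lam B2)" "ev X Y Z N N2" "ev X Y Z (subst B2 N2 0) u'" using cS hyps(1) by simp_all
    then show ?thesis using IH by (metis dB.inject(2))
  next
    case (nI M2)
    have "ev X Y Z M M2" using nI by simp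
    then show ?thesis using IH(1) nI by (metis is_abs.simps(1))
  next
    case (nS M2 N2)
    have "ev X Y Z M M2" using nS by simp
    then show ?thesis using IH(1) nS by (metis is_abs.simps(1))
  qed
next
  case (neuI M M' N)
  note IH = neuI.IH and hyps = neuI.hyps
  from neuI.prems show ?case
  proof (cases rule: app_E)
    case (cI B2)
    have "ev X Y Z M (Lam B2)" using cI by simp
    then show ?thesis using IH hyps by (metis is_abs.simps(1))
  next
    case (cS B2 N2)
    have "ev X Y Z M (Lam B2)" using cS by simp
    then show ?thesis using IH hyps by (metis is_abs.simps(1))
  next
    case (nI M2)
    have "ev X Y Z M M2" using nI hyps(1) by simp
    then show ?thesis using IH nI by simp
  next
    case (nS M2 N2) then show ?thesis using hyps(1) by simp
  qed
next
  case (neuS M M' N N')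
  note IH = neuS.IH and hyps = neuS.hyps
  from neuS.prems show ?case
  proof (cases rule: app_E)
    case (cI B2)
    have "ev X Y Z M (Lam B2)" using cI by simp
    then show ?thesis using IH hyps by (metis is_abs.simps(1))
  next
    case (cS B2 N2)
    have "ev X Y Z M (Lam B2)" using cS by simp
    then show ?thesis using IH hyps by (metis is_abs.simps(1))
  next
    case (nI M2) then show ?thesis using hyps(1) by simp
  next
    case (nS M2 N2)
    have "ev X Y Z M M2" "ev X Y Z N N2" using nS hyps(1) by simp_all
    then show ?thesis using IH nS by simp
  qed
qed

lemma eval_some: "ev X Y Z t u \<Longrightarrow> eval X Y Z t = Some u"
  unfolding eval_def using ev_det by (metis the_equality)

lemma eval_none: "\<not> (\<exists>u. ev X Y Z t u) \<Longrightarrow> eval X Y Z t = None"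
  unfolding eval_def by auto


lemma vv: "ev X Y Z (App (Var 0) (Var 0)) u \<Longrightarrow> u = App (Var 0) (Var 0)"
  by (erule app_E; auto elim: var_E)

lemma LL: "ev X Y Z (Lam (App (Var 0) (Var 0))) u \<Longrightarrow> u = Lam (App (Var 0) (Var 0))"
  by (erule lam_E; auto dest: vv)

lemma om_aux: "ev X Y Z t u \<Longrightarrow> t \<noteq> omega"
proof (induction rule: ev.induct)
  case (conI M B N B')
  then show ?case unfolding omega_def by (auto dest!: LL)
next
  case (conS M B N N' B')
  then show ?case unfolding omega_def by (auto dest!: LL)
next
  case (neuI M M' N)
  then show ?case unfolding omega_def by (auto dest!: LL)
next
  case (neuS M M' N N')
  then show ?case unfolding omega_def by (auto dest!: LL)
qed (auto simp: omega_def)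

lemma om: "\<not> ev X Y Z omega u" using om_aux by blast

lemma lamabs: "ev X Y Z (Lam B) u \<Longrightarrow> is_abs u"
  by (erule lam_E) auto

lemma varv: "ev X Y Z (Var n) u \<Longrightarrow> u = Var n"
  by (erule var_E) auto

lemma neuarg: "ev X Y S (App (Var n) N) u \<Longrightarrow> \<exists>v. ev X Y S N v"
  by (erule app_E) (auto dest: varv)

lemma w1_SSS: "\<not> ev S S S w1 u"
proof
  assume "ev S S S w1 u"
  then have "ev S S S (App (Lam (Var 1)) (Lam (App (Var 0) omega))) u"
    by (simp add: w1_def const_y_def)
  then show False
  proof (cases rule: app_E)
    case (cI B) then show False by simp
  next
    case (cS B N')
    from cS(3) show False
    proof (cases rule: lam_E)
      case aI then show False by simp
    next
      case (aS B') then show False using neuarg om by blast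
    qed
  next
    case (nI M') then show False by simp
  next
    case (nS M' N') then show False using lamabs by blast
  qed
qed

lemma w2_ISS: "\<not> ev I S S w2 u"
proof
  assume "ev I S S w2 u"
  then have "ev I S S (App (Lam (Var 1)) (App (Var 1) omega)) u"
    by (simp add: w2_def const_y_def)
  then show False
  proof (cases rule: app_E)
    case (cI B) then show False by simp
  next
    case (cS B N')
    from cS(3) show False using neuarg om by blast
  next
    case (nI M') then show False by simp
  next
    case (nS M' N') then show False using lamabs by blast
  qed
qed

lemma w3_SSI: "\<not> ev S S I w3 u"
proof
  assume "ev S S I w3 u"
  then have "ev S S I (App (Lam (Var 1)) (Lam omega)) u"
    by (simp add: w3_def const_y_def)
  then show False
  proof (cases rule: app_E)
    case (cI B) then show False by simp
  next
    case (cS B N')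
    from cS(3) show False
    proof (cases rule: lam_E)
      case aI then show False by simp
    next
      case (aS B') then show False using om by blast
    qed
  next
    case (nI M') then show False using lamabs by blast
  next
    case (nS M' N') then show False by simp
  qed
qed

lemma y: "ev X Y Z (Var 0) (Var 0)" by (rule ev.var)

lemma cy: "ev X Y Z const_y (Lam (Var 1))"
  unfolding const_y_def by (cases X) (auto intro: ev.intros)

lemma w1_ISI: "ev I S I w1 (Var 0)"
  unfolding w1_def
  by (rule ev.conS[OF _ cy ev.absI]) (auto intro: ev.intros)
lemma w1_ISS: "ev I S S w1 (Var 0)"
  unfolding w1_def
  by (rule ev.conS[OF _ cy ev.absI]) (auto intro: ev.intros)
lemma w1_SSI: "ev S S I w1 (Var 0)"
  unfolding w1_def
  by (rule ev.conS[OF _ cy ev.absS[OF _ ev.neuI[OF _ ev.var]]]) (auto intro: ev.intros)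
lemma w2_ISI: "ev I S I w2 (Var 0)"
  unfolding w2_def
  by (rule ev.conS[OF _ cy ev.neuI[OF _ ev.var]]) (auto intro: ev.intros)
lemma w3_ISI: "ev I S I w3 (Var 0)"
  unfolding w3_def
  by (rule ev.conS[OF _ cy ev.absI]) (auto intro: ev.intros)

lemma neq_fun: "f x \<noteq> g x \<Longrightarrow> f \<noteq> g" by auto

theorem mainTheorem6:
  shows "((eval S S S \<circ>\<^sub>m eval I S I) w1 \<noteq> eval S S S w1
          \<and> (eval S S S \<circ>\<^sub>m eval I S S) w1 \<noteq> eval S S S w1
          \<and> (eval S S S \<circ>\<^sub>m eval S S I) w1 \<noteq> eval S S S w1
          \<and> eval S S S \<circ>\<^sub>m eval I S I \<noteq> eval S S S
          \<and> eval S S S \<circ>\<^sub>m eval I S S \<noteq> eval S S S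
          \<and> eval S S S \<circ>\<^sub>m eval S S I \<noteq> eval S S S)
       \<and> ((eval I S S \<circ>\<^sub>m eval I S I) w2 \<noteq> eval I S S w2
          \<and> eval I S S \<circ>\<^sub>m eval I S I \<noteq> eval I S S)
       \<and> ((eval S S I \<circ>\<^sub>m eval I S I) w3 \<noteq> eval S S I w3
          \<and> eval S S I \<circ>\<^sub>m eval I S I \<noteq> eval S S I)"
proof -
  have a: "eval S S S w1 = None" "eval I S S w2 = None" "eval S S I w3 = None"
    using w1_SSS w2_ISS w3_SSI by (auto intro: eval_none)
  have b: "eval I S I w1 = Some (Var 0)" "eval I S S w1 = Some (Var 0)"
    "eval S S I w1 = Some (Var 0)" "eval I S I w2 = Some (Var 0)" "eval I S I w3 = Some (Var 0)"
    using w1_ISI w1_ISS w1_SSI w2_ISI w3_ISI by (auto intro: eval_some)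
  have c: "eval X Y Z (Var 0) = Some (Var 0)" for X Y Z by (rule eval_some[OF y])
  have d1: "(eval S S S \<circ>\<^sub>m eval I S I) w1 \<noteq> eval S S S w1"
     "(eval S S S \<circ>\<^sub>m eval I S S) w1 \<noteq> eval S S S w1"
     "(eval S S S \<circ>\<^sub>m eval S S I) w1 \<noteq> eval S S S w1"
     "(eval I S S \<circ>\<^sub>m eval I S I) w2 \<noteq> eval I S S w2"
     "(eval S S I \<circ>\<^sub>m eval I S I) w3 \<noteq> eval S S I w3"
    using a b c by (auto simp: map_comp_def)
  have d2: "eval S S S \<circ>\<^sub>m eval I S I \<noteq> eval S S S"
     "eval S S S \<circ>\<^sub>m eval I S S \<noteq> eval S S S"
     "eval S S S \<circ>\<^sub>m eval S S I \<noteq> eval S S S"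
     "eval I S S \<circ>\<^sub>m eval I S I \<noteq> eval I S S"
     "eval S S I \<circ>\<^sub>m eval I S I \<noteq> eval S S I"
    by (rule neq_fun, rule d1)+
  show ?thesis using d1 d2 by simp
qed

end
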